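(* Let $\mathcal C$ be a clustering problem satisfying Assumption 1, $P\in\Lambda$ with $p_{\min}=\min_{i\in[K]}\min_{a\in\mathcal X}P_i(a)>0$, $\gamma\in(0,1/K)$, and $\sigma'\in\mathcal C\setminus\{\sigma_P\}$. Then for all $x,y\in\Sigma_K^\gamma$, $$\|\nabla_wg_P^{\sigma'}(x)-\nabla_wg_P^{\sigma'}(y)\|_\infty\le\frac{D}{\gamma}\|x-y\|_\infty,\qquad D=\Big(\max_{\sigma''\in\mathcal C}\max_{m\in[M_{\sigma''}]}|\mathcal A_m^{\sigma''}|\Big)\frac{|\mathcal X|(1-p_{\min})}{4p_{\min}}.$$
   Context: Framework. Let $\mathcal X$ be a finite alphabet with $|\mathcal X|\ge2$, $\mathcal P(\mathcal X)$ the set of probability distributions on $\mathcal X$, and $K\ge2$ an integer (number of arms); $[n]=\{1,\dots,n\}$. A hypothesis is a collection $\sigma=\{\mathcal A_1^\sigma,\dots,\mathcal A_{M_\sigma}^\sigma\}$ ($M_\sigma\ge1$) of pairwise disjoint subsets of $[K]$, each of cardinality at least 2 (clusters); let $\mathcal A^\sigma_{M_\sigma+1}=[K]\setminus\bigcup_{m\le M_\sigma}\mathcal A_m^\sigma$. $\Lambda_\sigma$ is the set of $P\in\mathcal P(\mathcal X)^K$ with $P_i=P_j$ whenever $i,j\in\mathcal A_m^\sigma$ for some $m\le M_\sigma$, and $P_i\neq P_j$ whenever $i\in\mathcal A_{m_1}^\sigma$, $j\in\mathcal A_{m_2}^\sigma$ with $m_1\ne m_2\in[M_\sigma+1]$.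 A clustering problem is a finite set $\mathcal C$ of hypotheses with $|\mathcal C|\ge2$; $\Lambda=\bigcup_{\sigma\in\mathcal C}\Lambda_\sigma$. Hypothesis $\sigma$ dominates $\sigma'$ if every cluster of $\sigma$ is a subset of some cluster of $\sigma'$. Assumption 1: (i) there is no pair $\sigma\neq\sigma'$ in $\mathcal C$ such that $\sigma$ dominates $\sigma'$; (ii) every $P\in\Lambda$ belongs to $\Lambda_\sigma$ for exactly one $\sigma\in\mathcal C$, denoted $\sigma_P$. Functions. $D(P\|Q)$ is the KL divergence. $\Sigma_K=\{w\in\mathbb R^K: w_i\ge0,\sum_iw_i=1\}$ and $\Sigma_K^\gamma=\{w\in\Sigma_K:w_i\ge\gamma\ \forall i\}$. For $\mathcal A\subseteq[K]$, $G(P_{\mathcal A},w_{\mathcal A})=0$ if $w_i=0$ for all $i\in\mathcal A$, and otherwise $G(P_{\mathcal A},w_{\mathcal A})=\sum_{i\in\mathcal A}w_iD(P_i\|W)$ with $W=\sum_{i\in\mathcal A}w_iP_i/\sum_{i\in\mathcal A}w_i$. For $\sigma\in\mathcal C$, $g_P^\sigma(w)=\sum_{m=1}^{M_\sigma}G(P_{\mathcal A_m^\sigma},w_{\mathcal A_m^\sigma})$. The gradient $\nabla_w g_P^{\sigma'}(w)$ is the vector of partial derivatives in $w$ of the formula defining $g_P^{\sigma'}$ (on the positive orthant); explicitly its $i$-th coordinate is $D(P_i\|W_m)$ if $i\in\mathcal A_m^{\sigma'}$, with $W_m=\sum_{j\in\mathcal A_m^{\sigma'}}w_jP_j/\sum_{j\in\mathcal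 A_m^{\sigma'}}w_j$, and $0$ if $i$ is in no cluster of $\sigma'$. *)

theory Defs
  imports Complex_Main
begin

text \<open>Arms are indexed by {1..K}; a distribution on the finite alphabet 'x is a
  function 'x \<Rightarrow> real; a configuration P assigns a distribution P i to every arm i.\<close>

definition is_dist :: "('x::finite \<Rightarrow> real) \<Rightarrow> bool" where
  "is_dist p \<longleftrightarrow> (\<forall>a. p a \<ge> 0) \<and> sum p UNIV = 1"

definition is_hypothesis :: "nat \<Rightarrow> nat set set \<Rightarrow> bool" where
  "is_hypothesis K \<sigma> \<longleftrightarrow> finite \<sigma> \<and> \<sigma> \<noteq> {} \<and>
     (\<forall>A\<in>\<sigma>. A \<subseteq> {1..K} \<and> card A \<ge> 2) \<and>
     (\<forall>A\<in>\<sigma>. \<forall>B\<in>\<sigma>. A \<noteq> B \<longrightarrow> A \<inter> B = {})"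

text \<open>The groups A_1,...,A_M together with the leftover group A_{M+1}.\<close>
definition groups :: "nat \<Rightarrow> nat set set \<Rightarrow> nat set set" where
  "groups K \<sigma> = insert ({1..K} - \<Union>\<sigma>) \<sigma>"

definition in_Lambda :: "nat \<Rightarrow> nat set set \<Rightarrow> (nat \<Rightarrow> 'x::finite \<Rightarrow> real) \<Rightarrow> bool" where
  "in_Lambda K \<sigma> P \<longleftrightarrow> (\<forall>i\<in>{1..K}. is_dist (P i)) \<and>
     (\<forall>A\<in>\<sigma>. \<forall>i\<in>A. \<forall>j\<in>A. P i = P j) \<and>
     (\<forall>A\<in>groups K \<sigma>. \<forall>B\<in>groups K \<sigma>. A \<noteq> B \<longrightarrow> (\<forall>i\<in>A. \<forall>j\<in>B. P i \<noteq> P j))"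

definition in_Lambda_C :: "nat \<Rightarrow> nat set set set \<Rightarrow> (nat \<Rightarrow> 'x::finite \<Rightarrow> real) \<Rightarrow> bool" where
  "in_Lambda_C K C P \<longleftrightarrow> (\<exists>\<sigma>\<in>C. in_Lambda K \<sigma> P)"

definition is_clustering_problem :: "nat \<Rightarrow> nat set set set \<Rightarrow> bool" where
  "is_clustering_problem K C \<longleftrightarrow> finite C \<and> card C \<ge> 2 \<and> (\<forall>\<sigma>\<in>C. is_hypothesis K \<sigma>)"

definition dominates :: "nat set set \<Rightarrow> nat set set \<Rightarrow> bool" where
  "dominates \<sigma> \<sigma>' \<longleftrightarrow> (\<forall>A\<in>\<sigma>. \<exists>B\<in>\<sigma>'. A \<subseteq> B)"

definition assumption1 :: "'x::finite itself \<Rightarrow> nat \<Rightarrow> nat set set set \<Rightarrow> bool" where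
  "assumption1 _ K C \<longleftrightarrow>
     (\<forall>\<sigma>\<in>C. \<forall>\<sigma>'\<in>C. \<sigma> \<noteq> \<sigma>' \<longrightarrow> \<not> dominates \<sigma> \<sigma>') \<and>
     (\<forall>P :: nat \<Rightarrow> 'x \<Rightarrow> real. in_Lambda_C K C P \<longrightarrow> (\<exists>!\<sigma>. \<sigma> \<in> C \<and> in_Lambda K \<sigma> P))"

definition sigma_of :: "nat \<Rightarrow> nat set set set \<Rightarrow> (nat \<Rightarrow> 'x::finite \<Rightarrow> real) \<Rightarrow> nat set set" where
  "sigma_of K C P = (THE \<sigma>. \<sigma> \<in> C \<and> in_Lambda K \<sigma> P)"

definition KL :: "('x::finite \<Rightarrow> real) \<Rightarrow> ('x \<Rightarrow> real) \<Rightarrow> real" where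
  "KL p q = (\<Sum>a\<in>UNIV. if p a = 0 then 0 else p a * ln (p a / q a))"

definition mixture :: "(nat \<Rightarrow> 'x::finite \<Rightarrow> real) \<Rightarrow> (nat \<Rightarrow> real) \<Rightarrow> nat set \<Rightarrow> 'x \<Rightarrow> real" where
  "mixture P w A = (\<lambda>a. (\<Sum>j\<in>A. w j * P j a) / (\<Sum>j\<in>A. w j))"

text \<open>i-th coordinate of the gradient of g_P^sigma at w: D(P_i || W_m) if i is in
  cluster A_m of sigma, 0 if i is in no cluster (clusters are disjoint).\<close>
definition grad_g :: "(nat \<Rightarrow> 'x::finite \<Rightarrow> real) \<Rightarrow> nat set set \<Rightarrow> (nat \<Rightarrow> real) \<Rightarrow> nat \<Rightarrow> real" where
  "grad_g P \<sigma> w i = (\<Sum>A\<in>\<sigma>. if i \<in> A then KL (P i) (mixture P w A) else 0)"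

definition simplex_gamma :: "nat \<Rightarrow> real \<Rightarrow> (nat \<Rightarrow> real) set" where
  "simplex_gamma K \<gamma> = {w. (\<forall>i\<in>{1..K}. w i \<ge> \<gamma>) \<and> (\<Sum>i=1..K. w i) = 1}"

definition sup_norm :: "nat \<Rightarrow> (nat \<Rightarrow> real) \<Rightarrow> real" where
  "sup_norm K f = Max ((\<lambda>i. \<bar>f i\<bar>) ` {1..K})"

definition p_min :: "nat \<Rightarrow> (nat \<Rightarrow> 'x::finite \<Rightarrow> real) \<Rightarrow> real" where
  "p_min K P = Min {P i a | i a. i \<in> {1..K}}"

definition max_cluster_size :: "nat set set set \<Rightarrow> nat" where
  "max_cluster_size C = Max {card A | A \<sigma>. \<sigma> \<in> C \<and> A \<in> \<sigma>}"

end

theory Submission imports Defs begin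

lemma ln_diff_bound:
  fixes u v p :: real
  assumes "0 < p" "p \<le> u" "p \<le> v"
  shows "\<bar>ln u - ln v\<bar> \<le> \<bar>u - v\<bar> / p"
proof -
  have u: "u > 0" and v: "v > 0" using assms by auto
  have 1: "ln u - ln v \<le> (u - v) / v"
  proof -
    have "ln (u / v) \<le> u / v - 1" using ln_le_minus_one u v by simp
    thus ?thesis using u v by (simp add: ln_div diff_divide_distrib)
  qed
  have 2: "ln v - ln u \<le> (v - u) / u"
  proof -
    have "ln (v / u) \<le> v / u - 1" using ln_le_minus_one u v by simp
    thus ?thesis using u v by (simp add: ln_div diff_divide_distrib)
  qed
  have "(u - v) / v \<le> \<bar>u - v\<bar> / p"
    by (smt (verit) assms divide_le_cancel frac_le)
  moreover have "(v - u) / u \<le> \<bar>u - v\<bar> / p"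
    by (smt (verit) assms divide_le_cancel frac_le)
  ultimately show ?thesis using 1 2 by linarith
qed

lemma key_mix:
  fixes P :: "nat \<Rightarrow> 'x::finite \<Rightarrow> real" and x y :: "nat \<Rightarrow> real"
  assumes fin: "finite A" and ne: "A \<noteq> {}" and g: "0 < \<gamma>" and pp: "0 < p"
    and xg: "\<And>k. k \<in> A \<Longrightarrow> x k \<ge> \<gamma>" and yg: "\<And>k. k \<in> A \<Longrightarrow> y k \<ge> \<gamma>"
    and d: "\<And>k. k \<in> A \<Longrightarrow> \<bar>x k - y k\<bar> \<le> \<delta>"
    and Pl: "\<And>k. k \<in> A \<Longrightarrow> p \<le> P k a" and Pu: "\<And>k. k \<in> A \<Longrightarrow> P k a \<le> 1"
  shows "\<bar>ln (mixture P y A a) - ln (mixture P x A a)\<bar> \<le> (1 - p) / p * (\<delta> / \<gamma>)"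
proof -
  define Sx where "Sx = (\<Sum>j\<in>A. x j)"
  define Sy where "Sy = (\<Sum>j\<in>A. y j)"
  define Nx where "Nx = (\<Sum>j\<in>A. x j * P j a)"
  define Ny where "Ny = (\<Sum>j\<in>A. y j * P j a)"
  have cA: "card A > 0" using fin ne by (simp add: card_gt_0_iff)
  have Sxg: "Sx \<ge> card A * \<gamma>" unfolding Sx_def using sum_mono[of A "\<lambda>_. \<gamma>" x] xg by auto
  have Syg: "Sy \<ge> card A * \<gamma>" unfolding Sy_def using sum_mono[of A "\<lambda>_. \<gamma>" y] yg by auto
  have cg: "card A * \<gamma> > 0" using cA g by simp
  have Sxp: "Sx > 0" and Syp: "Sy > 0" using Sxg Syg cg by linarith+
  have Nxl: "Nx \<ge> p * Sx" unfolding Nx_def Sx_def sum_distrib_left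
    apply (rule sum_mono) using Pl xg g by (smt (verit) mult.commute mult_right_mono)
  have Nxu: "Nx \<le> Sx" unfolding Nx_def Sx_def
    apply (rule sum_mono) using Pu xg g by (smt (verit) mult_left_mono mult_cancel_left2)
  have Nyl: "Ny \<ge> p * Sy" unfolding Ny_def Sy_def sum_distrib_left
    apply (rule sum_mono) using Pl yg g by (smt (verit) mult.commute mult_right_mono)
  have Wx: "mixture P x A a = Nx / Sx" unfolding mixture_def Nx_def Sx_def by simp
  have Wy: "mixture P y A a = Ny / Sy" unfolding mixture_def Ny_def Sy_def by simp
  define W where "W = Nx / Sx"
  have Wl: "p \<le> W" unfolding W_def using Nxl Sxp by (simp add: pos_le_divide_eq mult.commute)
  have Wu: "W \<le> 1" unfolding W_def using Nxu Sxp by simp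
  have Wyl: "p \<le> Ny / Sy" using Nyl Syp by (simp add: pos_le_divide_eq mult.commute)
  have eq: "(\<Sum>k\<in>A. (y k - x k) * (P k a - W)) = Ny - W * Sy"
  proof -
    have "(\<Sum>k\<in>A. (y k - x k) * (P k a - W)) = Ny - Nx - W * (Sy - Sx)"
      unfolding Ny_def Nx_def Sy_def Sx_def
      by (simp add: algebra_simps sum_subtractf sum.distrib sum_distrib_left sum_distrib_right)
    also have "W * Sx = Nx" unfolding W_def using Sxp by simp
    ultimately show ?thesis by (simp add: algebra_simps)
  qed
  have "\<bar>\<Sum>k\<in>A. (y k - x k) * (P k a - W)\<bar> \<le> (\<Sum>k\<in>A. \<delta> * (1 - p))"
  proof -
    have "\<bar>\<Sum>k\<in>A. (y k - x k) * (P k a - W)\<bar> \<le> (\<Sum>k\<in>A. \<bar>(y k - x k) * (P k a - W)\<bar>)"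
      by (rule sum_abs)
    also have "\<dots> \<le> (\<Sum>k\<in>A. \<delta> * (1 - p))"
    proof (rule sum_mono)
      fix k assume k: "k \<in> A"
      have "\<bar>y k - x k\<bar> \<le> \<delta>" using d[OF k] by linarith
      moreover have "\<bar>P k a - W\<bar> \<le> 1 - p" using Pl[OF k] Pu[OF k] Wl Wu by linarith
      ultimately show "\<bar>(y k - x k) * (P k a - W)\<bar> \<le> \<delta> * (1 - p)"
        by (simp add: abs_mult mult_mono')
    qed
    finally show ?thesis .
  qed
  hence b1: "\<bar>Ny - W * Sy\<bar> \<le> card A * (\<delta> * (1 - p))" using eq by simp
  have "Ny / Sy - W = (Ny - W * Sy) / Sy" using Syp by (simp add: field_simps)
  hence "\<bar>Ny / Sy - W\<bar> = \<bar>Ny - W * Sy\<bar> / Sy" using Syp by simp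
  also have "\<dots> \<le> card A * (\<delta> * (1 - p)) / (card A * \<gamma>)"
  proof (rule frac_le)
    show "0 \<le> card A * (\<delta> * (1 - p))" using b1 by linarith
  qed (use b1 cg Syg in auto)
  also have "\<dots> = (1 - p) * (\<delta> / \<gamma>)" using cA g by (simp add: field_simps)
  finally have b2: "\<bar>Ny / Sy - W\<bar> \<le> (1 - p) * (\<delta> / \<gamma>)" .
  have "\<bar>ln (Ny / Sy) - ln W\<bar> \<le> \<bar>Ny / Sy - W\<bar> / p"
    by (rule ln_diff_bound[OF pp Wyl Wl])
  also have "\<dots> \<le> (1 - p) * (\<delta> / \<gamma>) / p" using divide_right_mono[OF b2, of p] pp by simp
  finally show ?thesis unfolding Wx Wy W_def by (simp add: mult.commute)
qed

lemma mix_lb: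
  fixes P :: "nat \<Rightarrow> 'x::finite \<Rightarrow> real" and x :: "nat \<Rightarrow> real"
  assumes fin: "finite A" and ne: "A \<noteq> {}" and g: "0 < \<gamma>"
    and xg: "\<And>k. k \<in> A \<Longrightarrow> x k \<ge> \<gamma>"
    and Pl: "\<And>k. k \<in> A \<Longrightarrow> p \<le> P k a"
  shows "p \<le> mixture P x A a"
proof -
  define Sx where "Sx = (\<Sum>j\<in>A. x j)"
  define Nx where "Nx = (\<Sum>j\<in>A. x j * P j a)"
  have cA: "card A > 0" using fin ne by (simp add: card_gt_0_iff)
  have Sxg: "Sx \<ge> card A * \<gamma>" unfolding Sx_def using sum_mono[of A "\<lambda>_. \<gamma>" x] xg by auto
  have Sxp: "Sx > 0" using Sxg cA g by (smt (verit) of_nat_0_less_iff mult_pos_pos)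
  have Nxl: "Nx \<ge> p * Sx" unfolding Nx_def Sx_def sum_distrib_left
    apply (rule sum_mono) using Pl xg g by (smt (verit) mult.commute mult_right_mono)
  have Wx: "mixture P x A a = Nx / Sx" unfolding mixture_def Nx_def Sx_def by simp
  show ?thesis unfolding Wx using Nxl Sxp by (simp add: pos_le_divide_eq mult.commute)
qed

theorem lemma5:
  fixes K :: nat and C :: "nat set set set" and P :: "nat \<Rightarrow> 'x::finite \<Rightarrow> real"
    and \<gamma> :: real and \<sigma>' :: "nat set set"
  assumes "card (UNIV :: 'x set) \<ge> 2" and "K \<ge> 2"
    and "is_clustering_problem K C" and "assumption1 TYPE('x) K C"
    and "in_Lambda_C K C P"
    and "p_min K P > 0"
    and "0 < \<gamma>" and "\<gamma> < 1 / real K"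
    and "\<sigma>' \<in> C - {sigma_of K C P}"
  shows "\<forall>x\<in>simplex_gamma K \<gamma>. \<forall>y\<in>simplex_gamma K \<gamma>.
           sup_norm K (\<lambda>i. grad_g P \<sigma>' x i - grad_g P \<sigma>' y i)
             \<le> (real (max_cluster_size C) * real (card (UNIV :: 'x set)) * (1 - p_min K P) / (4 * p_min K P))
                 / \<gamma> * sup_norm K (\<lambda>i. x i - y i)"
proof (intro ballI)
  fix x y assume xs: "x \<in> simplex_gamma K \<gamma>" and ys: "y \<in> simplex_gamma K \<gamma>"
  define p where "p = p_min K P"
  define m where "m = max_cluster_size C"
  define c where "c = card (UNIV :: 'x set)"
  define \<delta> where "\<delta> = sup_norm K (\<lambda>i. x i - y i)"
  have pp: "0 < p" using assms(6) p_def by simp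
  have g: "0 < \<gamma>" using assms(7) .
  have xg: "\<And>k. k \<in> {1..K} \<Longrightarrow> x k \<ge> \<gamma>" using xs unfolding simplex_gamma_def by auto
  have yg: "\<And>k. k \<in> {1..K} \<Longrightarrow> y k \<ge> \<gamma>" using ys unfolding simplex_gamma_def by auto
  have finS: "finite {P i a | i a. i \<in> {1..K}}"
  proof -
    have "{P i a | i a. i \<in> {1..K}} = (\<lambda>(i,a). P i a) ` ({1..K} \<times> UNIV)" by auto
    thus ?thesis by simp
  qed
  have Pl: "\<And>k a. k \<in> {1..K} \<Longrightarrow> p \<le> P k a"
    unfolding p_def p_min_def by (rule Min_le[OF finS]) blast
  obtain \<sigma>0 where "\<sigma>0 \<in> C" "in_Lambda K \<sigma>0 P" using assms(5) unfolding in_Lambda_C_def by blast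
  hence dist: "\<And>i. i \<in> {1..K} \<Longrightarrow> is_dist (P i)" unfolding in_Lambda_def by blast
  have Pu: "\<And>k a. k \<in> {1..K} \<Longrightarrow> P k a \<le> 1"
  proof -
    fix k a assume k: "k \<in> {1..K}"
    have "P k a \<le> sum (P k) UNIV"
      by (rule member_le_sum) (use dist[OF k] in \<open>auto simp: is_dist_def\<close>)
    thus "P k a \<le> 1" using dist[OF k] by (simp add: is_dist_def)
  qed
  have p1: "p \<le> 1" using Pl[of 1 undefined] Pu[of 1 undefined] assms(2) by auto
  have hyp: "is_hypothesis K \<sigma>'" using assms(3,9) unfolding is_clustering_problem_def by auto
  then obtain A0 where A0: "A0 \<in> \<sigma>'" "card A0 \<ge> 2" unfolding is_hypothesis_def by blast
  have m2: "m \<ge> 2"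
  proof -
    have "{card A | A \<sigma>. \<sigma> \<in> C \<and> A \<in> \<sigma>} = card ` (\<Union>C)" by auto
    moreover have "finite (\<Union>C)" using assms(3) unfolding is_clustering_problem_def is_hypothesis_def
      by auto
    ultimately have fin: "finite {card A | A \<sigma>. \<sigma> \<in> C \<and> A \<in> \<sigma>}" by simp
    have "card A0 \<le> m" unfolding m_def max_cluster_size_def
      by (rule Max_ge[OF fin]) (use A0 assms(9) in blast)
    thus ?thesis using A0 by simp
  qed
  have c2: "c \<ge> 2" using assms(1) c_def by simp
  have mc: "real m * real c \<ge> 4"
  proof -
    have "real m \<ge> 2" "real c \<ge> 2" using m2 c2 by auto
    thus ?thesis using mult_mono[of 2 "real m" 2 "real c"] by simp
  qed
  have Dge: "(1 - p) / p \<le> real m * real c * (1 - p) / (4 * p)"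
  proof -
    have "4 * (1 - p) \<le> real m * real c * (1 - p)" using mult_right_mono[OF mc, of "1 - p"] p1 by simp
    hence "4 * (1 - p) / (4 * p) \<le> real m * real c * (1 - p) / (4 * p)" using pp
      by (simp add: divide_right_mono)
    moreover have "4 * (1 - p) / (4 * p) = (1 - p) / p" using pp by (simp add: field_simps)
    ultimately show ?thesis by linarith
  qed
  have finK: "finite ((\<lambda>i. \<bar>x i - y i\<bar>) ` {1..K})" by simp
  have d: "\<And>k. k \<in> {1..K} \<Longrightarrow> \<bar>x k - y k\<bar> \<le> \<delta>"
    unfolding \<delta>_def sup_norm_def by (rule Max_ge[OF finK]) simp
  have \<delta>0: "0 \<le> \<delta>" using d[of 1] assms(2) by force
  have clA: "\<And>A. A \<in> \<sigma>' \<Longrightarrow> finite A \<and> A \<noteq> {} \<and> A \<subseteq> {1..K}"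
  proof -
    fix A assume A: "A \<in> \<sigma>'"
    hence "A \<subseteq> {1..K}" "card A \<ge> 2" using hyp unfolding is_hypothesis_def by auto
    thus "finite A \<and> A \<noteq> {} \<and> A \<subseteq> {1..K}" by (auto dest: finite_subset)
  qed
  have coord: "\<bar>grad_g P \<sigma>' x i - grad_g P \<sigma>' y i\<bar> \<le> (1 - p) / p * (\<delta> / \<gamma>)"
    if i: "i \<in> {1..K}" for i
  proof -
    have eqd: "grad_g P \<sigma>' x i - grad_g P \<sigma>' y i =
      (\<Sum>A\<in>\<sigma>'. if i \<in> A then KL (P i) (mixture P x A) - KL (P i) (mixture P y A) else 0)"
      unfolding grad_g_def by (simp add: sum_subtractf[symmetric] if_distrib cong: if_cong)
    have bnd0: "0 \<le> (1 - p) / p * (\<delta> / \<gamma>)" using pp p1 \<delta>0 g by simp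
    show ?thesis
    proof (cases "\<exists>A\<in>\<sigma>'. i \<in> A")
      case False
      thus ?thesis unfolding eqd using bnd0 by (simp add: sum.neutral)
    next
      case True
      then obtain A where A: "A \<in> \<sigma>'" "i \<in> A" by blast
      have finsig: "finite \<sigma>'" using hyp unfolding is_hypothesis_def by simp
      have "(\<Sum>A\<in>\<sigma>'. if i \<in> A then KL (P i) (mixture P x A) - KL (P i) (mixture P y A) else 0)
          = KL (P i) (mixture P x A) - KL (P i) (mixture P y A)"
      proof (subst sum.remove[OF finsig A(1)])
        have "\<forall>B\<in>\<sigma>' - {A}. i \<notin> B" using hyp A unfolding is_hypothesis_def by blast
        thus "(if i \<in> A then KL (P i) (mixture P x A) - KL (P i) (mixture P y A) else 0) +
          (\<Sum>B\<in>\<sigma>' - {A}. if i \<in> B then KL (P i) (mixture P x B) - KL (P i) (mixture P y B) else 0)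
          = KL (P i) (mixture P x A) - KL (P i) (mixture P y A)" using A(2) by simp
      qed
      hence eqA: "grad_g P \<sigma>' x i - grad_g P \<sigma>' y i = KL (P i) (mixture P x A) - KL (P i) (mixture P y A)"
        using eqd by simp
      have Ap: "finite A" "A \<noteq> {}" "A \<subseteq> {1..K}" using clA[OF A(1)] by auto
      have Wxl: "\<And>a. p \<le> mixture P x A a"
        by (rule mix_lb[OF Ap(1,2) g]) (use xg Pl Ap(3) in auto)
      have Wyl: "\<And>a. p \<le> mixture P y A a"
        by (rule mix_lb[OF Ap(1,2) g]) (use yg Pl Ap(3) in auto)
      have Pip: "\<And>a. 0 < P i a" using Pl[OF i] pp by (smt (verit))
      have kd: "KL (P i) (mixture P x A) - KL (P i) (mixture P y A)
          = (\<Sum>a\<in>UNIV. P i a * (ln (mixture P y A a) - ln (mixture P x A a)))"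
      proof -
        have "\<And>a. P i a * ln (P i a / mixture P x A a) - P i a * ln (P i a / mixture P y A a)
              = P i a * (ln (mixture P y A a) - ln (mixture P x A a))"
        proof -
          fix a
          have "0 < mixture P x A a" "0 < mixture P y A a" using Wxl[of a] Wyl[of a] pp by linarith+
          thus "P i a * ln (P i a / mixture P x A a) - P i a * ln (P i a / mixture P y A a)
              = P i a * (ln (mixture P y A a) - ln (mixture P x A a))"
            using Pip[of a] by (simp add: ln_div algebra_simps)
        qed
        thus ?thesis unfolding KL_def using Pip by (simp add: sum_subtractf[symmetric] less_imp_neq[symmetric])
      qed
      have "\<bar>\<Sum>a\<in>UNIV. P i a * (ln (mixture P y A a) - ln (mixture P x A a))\<bar>
          \<le> (\<Sum>a\<in>UNIV. P i a * ((1 - p) / p * (\<delta> / \<gamma>)))"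
      proof -
        have "\<bar>\<Sum>a\<in>UNIV. P i a * (ln (mixture P y A a) - ln (mixture P x A a))\<bar>
            \<le> (\<Sum>a\<in>UNIV. \<bar>P i a * (ln (mixture P y A a) - ln (mixture P x A a))\<bar>)" by (rule sum_abs)
        also have "\<dots> \<le> (\<Sum>a\<in>UNIV. P i a * ((1 - p) / p * (\<delta> / \<gamma>)))"
        proof (rule sum_mono)
          fix a :: 'x
          have "\<bar>ln (mixture P y A a) - ln (mixture P x A a)\<bar> \<le> (1 - p) / p * (\<delta> / \<gamma>)"
            by (rule key_mix[OF Ap(1,2) g pp]) (use xg yg d Pl Pu Ap(3) in auto)
          hence "P i a * \<bar>ln (mixture P y A a) - ln (mixture P x A a)\<bar> \<le> P i a * ((1 - p) / p * (\<delta> / \<gamma>))"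
            using Pip[of a] by (simp only: mult_left_mono less_imp_le)
          thus "\<bar>P i a * (ln (mixture P y A a) - ln (mixture P x A a))\<bar> \<le> P i a * ((1 - p) / p * (\<delta> / \<gamma>))"
            using Pip[of a] by (simp add: abs_mult)
        qed
        finally show ?thesis .
      qed
      also have "\<dots> = (1 - p) / p * (\<delta> / \<gamma>)"
        using dist[OF i] by (simp only: is_dist_def sum_distrib_right[symmetric])
      finally show ?thesis using eqA kd by simp
    qed
  qed
  have "(1 - p) / p * (\<delta> / \<gamma>) \<le> real m * real c * (1 - p) / (4 * p) / \<gamma> * \<delta>"
  proof -
    have "0 \<le> \<delta> / \<gamma>" using \<delta>0 g by simp
    hence "(1 - p) / p * (\<delta> / \<gamma>) \<le> (real m * real c * (1 - p) / (4 * p)) * (\<delta> / \<gamma>)"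
      using Dge by (rule mult_right_mono[rotated])
    thus ?thesis by simp
  qed
  hence fin: "\<And>i. i \<in> {1..K} \<Longrightarrow> \<bar>grad_g P \<sigma>' x i - grad_g P \<sigma>' y i\<bar>
      \<le> real m * real c * (1 - p) / (4 * p) / \<gamma> * \<delta>" using coord by (meson order_trans)
  show "sup_norm K (\<lambda>i. grad_g P \<sigma>' x i - grad_g P \<sigma>' y i)
             \<le> (real (max_cluster_size C) * real (card (UNIV :: 'x set)) * (1 - p_min K P) / (4 * p_min K P))
                 / \<gamma> * sup_norm K (\<lambda>i. x i - y i)"
    unfolding sup_norm_def[of K "\<lambda>i. grad_g P \<sigma>' x i - grad_g P \<sigma>' y i"]
    using fin assms(2) unfolding m_def c_def p_def \<delta>_def
    by (subst Max_le_iff) auto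
qed

end
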